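(* Let $X$ be a thin combinatorial $2$-complex, let $\mathcal H\le\mathrm{Aut}(X)$, let $Y\subset X$ be an $\mathcal H$-cocompact subcomplex, and let $R$ be a $2$-cell of $X$ that is a missing $3$-shell of $Y$; let $Y'=Y\cup\bigcup_{h\in\mathcal H}hR$. Let $e$ be a $1$-cell of $X$ on $\partial R$, let $e_1,\dots,e_{m_e}$ be all the $1$-cells of the boundary cycle of $R$ that map to $\mathcal H$-translates of $e$, and let $\mathrm{Added}(e)=\mathrm{Sides}_X(Y',e)\setminus\mathrm{Sides}_X(Y,e)$. Then $$|\mathrm{Added}(e)|\ \ge\ \frac{m_e}{|\mathrm{Aut}_{\mathcal H}(R)|}.$$
   Context: $\mathrm{Aut}(X)$ is the group of cellular automorphisms. A side at a $1$-cell $x$ is a pair $(R,r)$ with $R$ a $2$-cell and $r$ a $1$-cell of the boundary cycle $\partial R$ mapping to $x$; $X$ is thin if each $1$-cell has finitely many sides. For a subcomplex $Z$, $\mathrm{Sides}_X(Z,x)$ is the set of sides at $x$ that lift to $Z$, i.e. $x\subset Z$ and $(R,r)\to(X,x)$ factors through $Z$. $Y$ is $\mathcal H$-cocompact if $\mathcal H$-invariant with finitely many $\mathcal H$-orbits of cells. A piece is a nontrivial path factoring through boundary cycles of two $2$-cells in essentially distinct ways (no compatible homeomorphism of the boundary cycles). A missing $3$-shell of $Y$ is a $2$-cell $R$ of $X$ not contained in $Y$ with $\partial R=QS$, $Q$ a path in $Y$, $S$ a concatenation of at most $3$ pieces. $\mathrm{Aut}_{\mathcal H}(R)=\mathrm{Stab}_{\mathcal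 H}(R)/\mathrm{Fix}_{\mathcal H}(R)$, where $\mathrm{Fix}_{\mathcal H}(R)$ is the pointwise stabilizer of $R$ in $\mathcal H$. *)

theory Defs
  imports Main Complex_Main
begin

text \<open>
The cells of X are the elements of types:
vertices 'v, oriented 1-cells (darts) 'd, 2-cells 'f.  A 1-cell of X is a pair
{d, flip d} of opposite darts.  src d is the initial vertex of d, its terminal
vertex is src (flip d).  The boundary cycle of a 2-cell R is the closed path
bnd R (a cyclic list of darts); the 1-cells of the boundary circle of R are the
positions i < length (bnd R), position i being attached along bnd R ! i.
\<close>

definition closed_path :: "('d \<Rightarrow> 'v) \<Rightarrow> ('d \<Rightarrow> 'd) \<Rightarrow> 'd list \<Rightarrow> bool" where
  "closed_path src flip w \<longleftrightarrow>
     (\<forall>i<length w. src (flip (w ! i)) = src (w ! ((i + 1) mod length w)))"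

definition is_path :: "('d \<Rightarrow> 'v) \<Rightarrow> ('d \<Rightarrow> 'd) \<Rightarrow> 'd list \<Rightarrow> bool" where
  "is_path src flip w \<longleftrightarrow> (\<forall>j. Suc j < length w \<longrightarrow> src (flip (w ! j)) = src (w ! Suc j))"

definition complex2 :: "('d \<Rightarrow> 'v) \<Rightarrow> ('d \<Rightarrow> 'd) \<Rightarrow> ('f \<Rightarrow> 'd list) \<Rightarrow> bool" where
  "complex2 src flip bnd \<longleftrightarrow>
     (\<forall>d. flip (flip d) = d \<and> flip d \<noteq> d) \<and> (\<forall>R. closed_path src flip (bnd R))"

definition thin :: "('d \<Rightarrow> 'd) \<Rightarrow> ('f \<Rightarrow> 'd list) \<Rightarrow> bool" where
  "thin flip bnd \<longleftrightarrow>
     (\<forall>d. finite {(R, i). i < length (bnd R) \<and> bnd R ! i \<in> {d, flip d}})"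

text \<open>Combinatorial (dihedral) self-maps of the boundary circle with n 1-cells:
rotation (o = True) or reflection (o = False), acting on 1-cell positions.\<close>
definition dpos :: "nat \<Rightarrow> int \<Rightarrow> bool \<Rightarrow> nat \<Rightarrow> nat" where
  "dpos n k ori i = (if ori then nat ((k + int i) mod int n) else nat ((k - 1 - int i) mod int n))"

text \<open>A cellular map: action on vertices, darts, 2-cells, and for each 2-cell R
the induced map of the boundary circle of R onto that of its image.\<close>
datatype ('v, 'd, 'f) cellmap =
  CM (cv: "'v \<Rightarrow> 'v") (cd: "'d \<Rightarrow> 'd") (cf: "'f \<Rightarrow> 'f") (cb: "'f \<Rightarrow> nat \<Rightarrow> nat")

definition is_aut :: "('d \<Rightarrow> 'v) \<Rightarrow> ('d \<Rightarrow> 'd) \<Rightarrow> ('f \<Rightarrow> 'd list) \<Rightarrow> ('v, 'd, 'f) cellmap \<Rightarrow> bool" where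
  "is_aut src flip bnd g \<longleftrightarrow>
     bij (cv g) \<and> bij (cd g) \<and> bij (cf g) \<and>
     (\<forall>d. cd g (flip d) = flip (cd g d) \<and> src (cd g d) = cv g (src d)) \<and>
     (\<forall>R. length (bnd (cf g R)) = length (bnd R) \<and>
        (\<exists>k ori. \<forall>i. cb g R i = (if i < length (bnd R) then dpos (length (bnd R)) k ori i else i) \<and>
           (i < length (bnd R) \<longrightarrow>
              bnd (cf g R) ! cb g R i = (if ori then cd g (bnd R ! i) else flip (cd g (bnd R ! i))))))"

definition comp_cm :: "('v, 'd, 'f) cellmap \<Rightarrow> ('v, 'd, 'f) cellmap \<Rightarrow> ('v, 'd, 'f) cellmap" where
  "comp_cm g h = CM (cv g \<circ> cv h) (cd g \<circ> cd h) (cf g \<circ> cf h) (\<lambda>R. cb g (cf h R) \<circ> cb h R)"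

definition id_cm :: "('v, 'd, 'f) cellmap" where
  "id_cm = CM id id id (\<lambda>R. id)"

definition aut_subgroup :: "('d \<Rightarrow> 'v) \<Rightarrow> ('d \<Rightarrow> 'd) \<Rightarrow> ('f \<Rightarrow> 'd list) \<Rightarrow> ('v, 'd, 'f) cellmap set \<Rightarrow> bool" where
  "aut_subgroup src flip bnd H \<longleftrightarrow>
     (\<forall>g\<in>H. is_aut src flip bnd g) \<and> id_cm \<in> H \<and>
     (\<forall>g\<in>H. \<forall>h\<in>H. comp_cm g h \<in> H) \<and>
     (\<forall>g\<in>H. \<exists>h\<in>H. comp_cm g h = id_cm \<and> comp_cm h g = id_cm)"

definition subcomplex :: "('d \<Rightarrow> 'v) \<Rightarrow> ('d \<Rightarrow> 'd) \<Rightarrow> ('f \<Rightarrow> 'd list) \<Rightarrow> 'v set \<Rightarrow> 'd set \<Rightarrow> 'f set \<Rightarrow> bool" where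
  "subcomplex src flip bnd Yv Yd Yf \<longleftrightarrow>
     (\<forall>d\<in>Yd. flip d \<in> Yd \<and> src d \<in> Yv) \<and> (\<forall>R\<in>Yf. set (bnd R) \<subseteq> Yd)"

definition cocompact :: "('d \<Rightarrow> 'd) \<Rightarrow> ('v, 'd, 'f) cellmap set \<Rightarrow> 'v set \<Rightarrow> 'd set \<Rightarrow> 'f set \<Rightarrow> bool" where
  "cocompact flip H Yv Yd Yf \<longleftrightarrow>
     (\<forall>h\<in>H. cv h ` Yv \<subseteq> Yv \<and> cd h ` Yd \<subseteq> Yd \<and> cf h ` Yf \<subseteq> Yf) \<and>
     finite ((\<lambda>v. (\<lambda>h. cv h v) ` H) ` Yv) \<and>
     finite ((\<lambda>d. (\<lambda>h. cd h ` {d, flip d}) ` H) ` Yd) \<and>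
     finite ((\<lambda>R. (\<lambda>h. cf h R) ` H) ` Yf)"

definition sides_in :: "('d \<Rightarrow> 'd) \<Rightarrow> ('f \<Rightarrow> 'd list) \<Rightarrow> 'd set \<Rightarrow> 'f set \<Rightarrow> 'd \<Rightarrow> ('f \<times> nat) set" where
  "sides_in flip bnd Zd Zf d =
     {(R, i). d \<in> Zd \<and> R \<in> Zf \<and> i < length (bnd R) \<and> bnd R ! i \<in> {d, flip d}}"

text \<open>Darts of the boundary circle of a 2-cell: (position, forward?).\<close>
definition circ_start :: "nat \<Rightarrow> nat \<times> bool \<Rightarrow> nat" where
  "circ_start n c = (if snd c then fst c else (fst c + 1) mod n)"

definition circ_end :: "nat \<Rightarrow> nat \<times> bool \<Rightarrow> nat" where
  "circ_end n c = (if snd c then (fst c + 1) mod n else fst c)"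

definition attach :: "('d \<Rightarrow> 'd) \<Rightarrow> ('f \<Rightarrow> 'd list) \<Rightarrow> 'f \<Rightarrow> nat \<times> bool \<Rightarrow> 'd" where
  "attach flip bnd R c = (if snd c then bnd R ! fst c else flip (bnd R ! fst c))"

definition lifts :: "('d \<Rightarrow> 'd) \<Rightarrow> ('f \<Rightarrow> 'd list) \<Rightarrow> 'f \<Rightarrow> 'd list \<Rightarrow> (nat \<times> bool) list \<Rightarrow> bool" where
  "lifts flip bnd R P l \<longleftrightarrow>
     length l = length P \<and>
     (\<forall>j<length l. fst (l ! j) < length (bnd R) \<and> attach flip bnd R (l ! j) = P ! j) \<and>
     (\<forall>j. Suc j < length l \<longrightarrow>
        circ_end (length (bnd R)) (l ! j) = circ_start (length (bnd R)) (l ! Suc j))"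

definition dmap :: "nat \<Rightarrow> int \<Rightarrow> bool \<Rightarrow> nat \<times> bool \<Rightarrow> nat \<times> bool" where
  "dmap n k ori c = (dpos n k ori (fst c), (if ori then snd c else \<not> snd c))"

text \<open>The two lifts differ by a compatible homeomorphism of boundary circles.\<close>
definition compatible_lifts :: "('d \<Rightarrow> 'd) \<Rightarrow> ('f \<Rightarrow> 'd list) \<Rightarrow> 'f \<Rightarrow> 'f \<Rightarrow>
    (nat \<times> bool) list \<Rightarrow> (nat \<times> bool) list \<Rightarrow> bool" where
  "compatible_lifts flip bnd R1 R2 l1 l2 \<longleftrightarrow>
     length (bnd R1) = length (bnd R2) \<and>
     (\<exists>k ori. (\<forall>i<length (bnd R1). \<forall>b.
                attach flip bnd R2 (dmap (length (bnd R1)) k ori (i, b)) = attach flip bnd R1 (i, b)) \<and>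
            map (dmap (length (bnd R1)) k ori) l1 = l2)"

definition piece :: "('d \<Rightarrow> 'v) \<Rightarrow> ('d \<Rightarrow> 'd) \<Rightarrow> ('f \<Rightarrow> 'd list) \<Rightarrow> 'd list \<Rightarrow> bool" where
  "piece src flip bnd P \<longleftrightarrow>
     P \<noteq> [] \<and> is_path src flip P \<and>
     (\<exists>R1 R2 l1 l2. lifts flip bnd R1 P l1 \<and> lifts flip bnd R2 P l2 \<and>
        \<not> compatible_lifts flip bnd R1 R2 l1 l2)"

definition missing_3_shell :: "('d \<Rightarrow> 'v) \<Rightarrow> ('d \<Rightarrow> 'd) \<Rightarrow> ('f \<Rightarrow> 'd list) \<Rightarrow>
    'v set \<Rightarrow> 'd set \<Rightarrow> 'f set \<Rightarrow> 'f \<Rightarrow> bool" where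
  "missing_3_shell src flip bnd Yv Yd Yf R \<longleftrightarrow>
     R \<notin> Yf \<and>
     (\<exists>cw Q S. (cw \<in> range (\<lambda>k. rotate k (bnd R)) \<or> cw \<in> range (\<lambda>k. rotate k (rev (map flip (bnd R))))) \<and>
        cw = Q @ S \<and> set Q \<subseteq> Yd \<and> (cw \<noteq> [] \<longrightarrow> src (hd cw) \<in> Yv) \<and>
        (\<exists>ps. length ps \<le> 3 \<and> (\<forall>p\<in>set ps. piece src flip bnd p) \<and> concat ps = S))"

text \<open>|Aut_H(R)| = number of cosets of Fix_H(R) in Stab_H(R).\<close>
definition stab_H :: "('v, 'd, 'f) cellmap set \<Rightarrow> 'f \<Rightarrow> ('v, 'd, 'f) cellmap set" where
  "stab_H H R = {h \<in> H. cf h R = R}"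

definition fix_H :: "('f \<Rightarrow> 'd list) \<Rightarrow> ('v, 'd, 'f) cellmap set \<Rightarrow> 'f \<Rightarrow> ('v, 'd, 'f) cellmap set" where
  "fix_H bnd H R = {h \<in> stab_H H R. \<forall>i<length (bnd R). cb h R i = i}"

definition aut_H_card :: "('f \<Rightarrow> 'd list) \<Rightarrow> ('v, 'd, 'f) cellmap set \<Rightarrow> 'f \<Rightarrow> nat" where
  "aut_H_card bnd H R = card ((\<lambda>g. comp_cm g ` fix_H bnd H R) ` stab_H H R)"

end

theory Submission
  imports Defs
begin

lemma aut_cb:
  assumes "is_aut src flip bnd g" "i < length (bnd R)"
  shows "cb g R i < length (bnd (cf g R)) \<and>
         (bnd (cf g R) ! cb g R i = cd g (bnd R ! i) \<or> bnd (cf g R) ! cb g R i = flip (cd g (bnd R ! i)))"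
proof -
  from assms(1) have len: "length (bnd (cf g R)) = length (bnd R)"
    and ex: "\<exists>k ori. \<forall>i. cb g R i = (if i < length (bnd R) then dpos (length (bnd R)) k ori i else i) \<and>
           (i < length (bnd R) \<longrightarrow>
              bnd (cf g R) ! cb g R i = (if ori then cd g (bnd R ! i) else flip (cd g (bnd R ! i))))"
    unfolding is_aut_def by blast+
  then obtain k ori where kk: "\<forall>i. cb g R i = (if i < length (bnd R) then dpos (length (bnd R)) k ori i else i) \<and>
           (i < length (bnd R) \<longrightarrow>
              bnd (cf g R) ! cb g R i = (if ori then cd g (bnd R ! i) else flip (cd g (bnd R ! i))))"
    by blast
  define n where "n = length (bnd R)"
  have np: "0 < n" using assms(2) n_def by linarith
  have d: "dpos n k ori i < n" for k ori i
  proof -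
    have "\<And>x. nat (x mod int n) < n"
    proof -
      fix x
      have "0 \<le> x mod int n" "x mod int n < int n" using np by simp_all
      then show "nat (x mod int n) < n" by (simp add: nat_less_iff)
    qed
    then show ?thesis unfolding dpos_def by simp
  qed
  have "cb g R i < n" using kk assms(2) d n_def by simp
  then show ?thesis using kk assms(2) len n_def by (cases ori) auto
qed

lemma count_fib:
  assumes "finite M" "finite T" "\<phi> ` M \<subseteq> T" "\<And>s. card {i\<in>M. \<phi> i = s} \<le> A"
  shows "card M \<le> card T * A"
proof -
  have "M = (\<Union>s\<in>T. {i\<in>M. \<phi> i = s})" using assms(3) by blast
  then have "card M \<le> (\<Sum>s\<in>T. card {i\<in>M. \<phi> i = s})"
    by (metis assms(2) card_UN_le)
  also have "\<dots> \<le> card T * A" using sum_bounded_above[of T "\<lambda>s. card {i\<in>M. \<phi> i = s}" A] assms(4)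
    by simp
  finally show ?thesis .
qed

theorem lemma3p15:
  fixes src :: "'d \<Rightarrow> 'v" and flip :: "'d \<Rightarrow> 'd" and bnd :: "'f \<Rightarrow> 'd list"
    and H :: "('v, 'd, 'f) cellmap set"
    and Yv :: "'v set" and Yd :: "'d set" and Yf :: "'f set" and R :: 'f and e :: 'd
  assumes "complex2 src flip bnd"
    and "thin flip bnd"
    and "aut_subgroup src flip bnd H"
    and "subcomplex src flip bnd Yv Yd Yf"
    and "cocompact flip H Yv Yd Yf"
    and "missing_3_shell src flip bnd Yv Yd Yf R"
    and "\<exists>i<length (bnd R). bnd R ! i \<in> {e, flip e}"
  shows "real (card (sides_in flip bnd
                (Yd \<union> {d. \<exists>h\<in>H. d \<in> set (bnd (cf h R)) \<or> flip d \<in> set (bnd (cf h R))})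
                (Yf \<union> (\<lambda>h. cf h R) ` H) e
              - sides_in flip bnd Yd Yf e))
         \<ge> real (card {i. i < length (bnd R) \<and> (\<exists>h\<in>H. bnd R ! i \<in> {cd h e, flip (cd h e)})})
           / real (aut_H_card bnd H R)"
proof -
  have isaut: "\<And>g. g \<in> H \<Longrightarrow> is_aut src flip bnd g" and idH: "id_cm \<in> H"
    and clos: "\<And>g h. g \<in> H \<Longrightarrow> h \<in> H \<Longrightarrow> comp_cm g h \<in> H"
    and inv: "\<And>g. g \<in> H \<Longrightarrow> \<exists>h\<in>H. comp_cm g h = id_cm \<and> comp_cm h g = id_cm"
    using assms(3) unfolding aut_subgroup_def by blast+
  have ff: "\<And>d. flip (flip d) = d" using assms(1) unfolding complex2_def by blast
  have flipc: "\<And>g d. g \<in> H \<Longrightarrow> cd g (flip d) = flip (cd g d)"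
    using isaut unfolding is_aut_def by blast
  have Yinv: "\<And>h. h \<in> H \<Longrightarrow> cf h ` Yf \<subseteq> Yf" using assms(5) unfolding cocompact_def by blast
  have RnY: "R \<notin> Yf" using assms(6) unfolding missing_3_shell_def by blast
  have cfc: "cf (comp_cm g h) = cf g \<circ> cf h" for g h :: "('v,'d,'f) cellmap" by (simp add: comp_cm_def)
  have cdc: "cd (comp_cm g h) = cd g \<circ> cd h" for g h :: "('v,'d,'f) cellmap" by (simp add: comp_cm_def)
  have cbc: "cb (comp_cm g h) R' = cb g (cf h R') \<circ> cb h R'" for g h :: "('v,'d,'f) cellmap" and R'
    by (simp add: comp_cm_def)
  have idf: "cf id_cm = id" "cd id_cm = id" "cb id_cm R' = id" for R' :: 'f by (simp_all add: id_cm_def)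
  define n where "n = length (bnd R)"
  define M where "M = {i. i < length (bnd R) \<and> (\<exists>h\<in>H. bnd R ! i \<in> {cd h e, flip (cd h e)})}"
  define Yd' where "Yd' = Yd \<union> {d. \<exists>h\<in>H. d \<in> set (bnd (cf h R)) \<or> flip d \<in> set (bnd (cf h R))}"
  define Add where "Add = sides_in flip bnd Yd' (Yf \<union> (\<lambda>h. cf h R) ` H) e - sides_in flip bnd Yd Yf e"
  define A where "A = aut_H_card bnd H R"
  define Stab where "Stab = stab_H H R"
  define Fix where "Fix = fix_H bnd H R"
  have finAdd: "finite Add"
  proof -
    have "Add \<subseteq> {(R, i). i < length (bnd R) \<and> bnd R ! i \<in> {e, flip e}}"
      unfolding Add_def sides_in_def by auto
    moreover have "finite {(R, i). i < length (bnd R) \<and> bnd R ! i \<in> {e, flip e}}"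
      using assms(2) unfolding thin_def by blast
    ultimately show ?thesis by (rule finite_subset)
  qed
  have finM: "finite M" unfolding M_def by simp
  show ?thesis
  proof (cases "A = 0")
    case True
    then show ?thesis unfolding A_def by simp
  next
    case False
    have finC: "finite ((\<lambda>g. comp_cm g ` Fix) ` Stab)"
      using False unfolding A_def aut_H_card_def Fix_def Stab_def by (meson card.infinite)
    have exg: "\<exists>g. g \<in> H \<and> bnd (cf g R) ! cb g R i \<in> {e, flip e}" if "i \<in> M" for i
    proof -
      from that obtain h where h: "h \<in> H" "bnd R ! i \<in> {cd h e, flip (cd h e)}" and il: "i < n"
        unfolding M_def n_def by blast
      from inv[OF h(1)] obtain g where g: "g \<in> H" "comp_cm g h = id_cm" by blast
      have ge: "cd g (cd h e) = e" using arg_cong[OF g(2), of cd] cdc idf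
        by (metis comp_apply id_apply)
      from aut_cb[OF isaut[OF g(1)], of i R] il n_def
      have "bnd (cf g R) ! cb g R i = cd g (bnd R ! i) \<or> bnd (cf g R) ! cb g R i = flip (cd g (bnd R ! i))"
        by simp
      then have "bnd (cf g R) ! cb g R i \<in> {e, flip e}"
        using h(2) ge flipc[OF g(1)] ff by auto
      then show ?thesis using g(1) by blast
    qed
    define gi where "gi i = (SOME g. g \<in> H \<and> bnd (cf g R) ! cb g R i \<in> {e, flip e})" for i
    have gi: "gi i \<in> H \<and> bnd (cf (gi i) R) ! cb (gi i) R i \<in> {e, flip e}" if "i \<in> M" for i
      unfolding gi_def by (rule someI_ex[OF exg[OF that]])
    define \<phi> where "\<phi> i = (cf (gi i) R, cb (gi i) R i)" for i
    have phiA: "\<phi> ` M \<subseteq> Add"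
    proof
      fix s assume "s \<in> \<phi> ` M"
      then obtain i where i: "i \<in> M" "s = \<phi> i" by blast
      have il: "i < n" using i(1) unfolding M_def n_def by blast
      let ?g = "gi i"
      have g: "?g \<in> H" "bnd (cf ?g R) ! cb ?g R i \<in> {e, flip e}" using gi[OF i(1)] by auto
      have jl: "cb ?g R i < length (bnd (cf ?g R))" using aut_cb[OF isaut[OF g(1)], of i R] il n_def by simp
      have "e \<in> Yd'"
      proof -
        have "bnd (cf ?g R) ! cb ?g R i \<in> set (bnd (cf ?g R))" using jl by simp
        then have "e \<in> set (bnd (cf ?g R)) \<or> flip e \<in> set (bnd (cf ?g R))" using g(2) by auto
        then show ?thesis unfolding Yd'_def using g(1) by blast
      qed
      moreover have "cf ?g R \<notin> Yf"
      proof
        assume a: "cf ?g R \<in> Yf"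
        from inv[OF g(1)] obtain h where h: "h \<in> H" "comp_cm h ?g = id_cm" by blast
        have "cf h (cf ?g R) = R" using arg_cong[OF h(2), of cf] cfc idf
          by (metis comp_apply id_apply)
        moreover have "cf h (cf ?g R) \<in> Yf" using Yinv[OF h(1)] a by blast
        ultimately show False using RnY by simp
      qed
      ultimately show "s \<in> Add" unfolding Add_def sides_in_def \<phi>_def i(2) using g jl by auto
    qed
    have orb: "\<exists>k\<in>Stab. cb k R i = i'"
      if "g \<in> H" "g' \<in> H" "cf g R = cf g' R" "cb g R i = cb g' R i'" for g g' i i'
    proof -
      from inv[OF that(2)] obtain h where h: "h \<in> H" "comp_cm h g' = id_cm" by blast
      let ?k = "comp_cm h g"
      have "?k \<in> H" using clos h(1) that(1) by blast
      moreover have "cf ?k R = R"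
      proof -
        have "cf ?k R = cf h (cf g' R)" using that(3) cfc by simp
        also have "\<dots> = cf (comp_cm h g') R" using cfc by simp
        finally show ?thesis using h(2) by (simp add: id_cm_def)
      qed
      moreover have "cb ?k R i = i'"
      proof -
        have "cb ?k R i = cb h (cf g' R) (cb g' R i')" using that(3,4) cbc by simp
        also have "\<dots> = cb (comp_cm h g') R i'" using cbc by simp
        finally show ?thesis using h(2) by (simp add: id_cm_def)
      qed
      ultimately show ?thesis unfolding Stab_def stab_H_def by blast
    qed
    have orbcard: "card ((\<lambda>k. cb k R i0) ` Stab) \<le> A" if i0: "i0 < n" for i0
    proof -
      define \<psi> where "\<psi> C = cb (SOME k. k \<in> C) R i0" for C :: "(('v,'d,'f) cellmap) set"
      have "(\<lambda>k. cb k R i0) ` Stab \<subseteq> \<psi> ` ((\<lambda>g. comp_cm g ` Fix) ` Stab)"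
      proof
        fix x assume "x \<in> (\<lambda>k. cb k R i0) ` Stab"
        then obtain k where k: "k \<in> Stab" "x = cb k R i0" by blast
        have idF: "id_cm \<in> Fix" unfolding Fix_def fix_H_def stab_H_def using idH by (simp add: id_cm_def)
        have "\<psi> (comp_cm k ` Fix) = cb k R i0"
        proof -
          have "(SOME k'. k' \<in> comp_cm k ` Fix) \<in> comp_cm k ` Fix"
            using idF by (metis imageI someI_ex)
          then obtain f where f: "f \<in> Fix" "(SOME k'. k' \<in> comp_cm k ` Fix) = comp_cm k f" by blast
          have "cf f R = R" "cb f R i0 = i0" using f(1) i0 unfolding Fix_def fix_H_def stab_H_def n_def by auto
          then show ?thesis unfolding \<psi>_def f(2) using cbc by simp
        qed
        then show "x \<in> \<psi> ` ((\<lambda>g. comp_cm g ` Fix) ` Stab)" using k by (metis image_eqI)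
      qed
      then have "card ((\<lambda>k. cb k R i0) ` Stab) \<le> card (\<psi> ` ((\<lambda>g. comp_cm g ` Fix) ` Stab))"
        using finC by (simp add: card_mono)
      also have "\<dots> \<le> card ((\<lambda>g. comp_cm g ` Fix) ` Stab)" using finC card_image_le by blast
      also have "\<dots> = A" unfolding A_def aut_H_card_def Fix_def Stab_def by simp
      finally show ?thesis .
    qed
    have fib: "card {i\<in>M. \<phi> i = s} \<le> A" for s
    proof (cases "{i\<in>M. \<phi> i = s} = {}")
      case True then show ?thesis by (simp only: card.empty)
    next
      case False
      then obtain i0 where i0: "i0 \<in> M" "\<phi> i0 = s" by blast
      have i0l: "i0 < n" using i0(1) unfolding M_def n_def by blast
      have "{i\<in>M. \<phi> i = s} \<subseteq> (\<lambda>k. cb k R i0) ` Stab"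
      proof
        fix i assume "i \<in> {i\<in>M. \<phi> i = s}"
        then have i: "i \<in> M" "\<phi> i = \<phi> i0" using i0 by auto
        have "\<exists>k\<in>Stab. cb k R i0 = i"
          apply (rule orb[of "gi i0" "gi i"])
          using gi[OF i(1)] gi[OF i0(1)] i(2) unfolding \<phi>_def by auto
        then show "i \<in> (\<lambda>k. cb k R i0) ` Stab" by force
      qed
      moreover have "finite ((\<lambda>k. cb k R i0) ` Stab)"
      proof -
        have "(\<lambda>k. cb k R i0) ` Stab \<subseteq> {..<n}"
        proof
          fix x assume "x \<in> (\<lambda>k. cb k R i0) ` Stab"
          then obtain k where k: "k \<in> Stab" "x = cb k R i0" by blast
          have "k \<in> H" "cf k R = R" using k(1) unfolding Stab_def stab_H_def by auto
          then show "x \<in> {..<n}" using aut_cb[OF isaut, of k i0 R] i0l k(2) n_def by simp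
        qed
        then show ?thesis by (rule finite_subset) simp
      qed
      ultimately have "card {i\<in>M. \<phi> i = s} \<le> card ((\<lambda>k. cb k R i0) ` Stab)" by (simp add: card_mono)
      then show ?thesis using orbcard[OF i0l] by linarith
    qed
    have key: "card M \<le> card Add * A" by (rule count_fib[OF finM finAdd phiA fib])
    have Apos: "real A > 0" using False by simp
    have "real (card M) \<le> real (card Add) * real A" using key
      by (metis of_nat_le_iff of_nat_mult)
    then have "real (card M) / real A \<le> real (card Add)" using Apos by (simp add: divide_le_eq)
    then show ?thesis unfolding M_def Add_def Yd'_def A_def by simp
  qed
qed

end
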